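(* Let $M=\langle n_1,n_2,n_3\rangle$ be a numerical monoid of embedding dimension three with minimal generators $n_1<n_2<n_3$ and exactly three Betti elements, and let $(r_{ij})$ be its associated 0-matrix. Then: (1) $L(x+n_1)=L(x)+1$ holds for all $x\in M$ if and only if $r_{12}+r_{32}\leq r_{21}+r_{23}$; (2) $\ell(x+n_3)=\ell(x)+1$ holds for all $x\in M$ if and only if $r_{12}+r_{32}\geq r_{21}+r_{23}$.
   Context: $\mathbb{N}$ denotes the nonnegative integers. A numerical monoid is a submonoid of $\mathbb{N}$ with finite complement. For $x\in M$, $\mathsf{Z}(x)=\{(a_1,a_2,a_3)\in\mathbb{N}^3\mid a_1n_1+a_2n_2+a_3n_3=x\}$; $L(x)$, $\ell(x)$ are the maximum and minimum of $a_1+a_2+a_3$ over $\mathsf{Z}(x)$. The graph $\nabla_x$ has vertex set $\mathsf{Z}(x)$, distinct $v,v'$ adjacent iff $v\cdot v'\neq0$; $x$ is a Betti element if $\nabla_x$ is disconnected. For $i=1,2,3$, $c_i=\min\{k\geq1\mid\exists(a_1,a_2,a_3)\in\mathsf{Z}(kn_i),\ a_i=0\}$. The associated 0-matrix of $M$ is $\begin{pmatrix}0&r_{12}&r_{13}\\ r_{21}&0&r_{23}\\ r_{31}&r_{32}&0\end{pmatrix}$ where $r_{ij}\in\mathbb{N}$ satisfy $c_1n_1=r_{12}n_2+r_{13}n_3$, $c_2n_2=r_{21}n_1+r_{23}n_3$, $c_3n_3=r_{31}n_1+r_{32}n_2$ (these are uniquely determined, and positive, when $M$ has three Betti elements). 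*)

theory Defs
  imports Main
begin

type_synonym fact3 = "nat \<times> nat \<times> nat"

definition Z :: "nat \<Rightarrow> nat \<Rightarrow> nat \<Rightarrow> nat \<Rightarrow> fact3 set" where
  "Z n1 n2 n3 x = {(a1, a2, a3). a1 * n1 + a2 * n2 + a3 * n3 = x}"

definition gen_monoid :: "nat \<Rightarrow> nat \<Rightarrow> nat \<Rightarrow> nat set" where
  "gen_monoid n1 n2 n3 = {x. Z n1 n2 n3 x \<noteq> {}}"

definition emb_dim3 :: "nat \<Rightarrow> nat \<Rightarrow> nat \<Rightarrow> bool" where
  "emb_dim3 n1 n2 n3 \<longleftrightarrow> 0 < n1 \<and> n1 < n2 \<and> n2 < n3
     \<and> finite (UNIV - gen_monoid n1 n2 n3)
     \<and> n1 \<notin> {a * n2 + b * n3 | a b. True}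
     \<and> n2 \<notin> {a * n1 + b * n3 | a b. True}
     \<and> n3 \<notin> {a * n1 + b * n2 | a b. True}"

definition flen :: "fact3 \<Rightarrow> nat" where
  "flen v = (case v of (a1, a2, a3) \<Rightarrow> a1 + a2 + a3)"

definition maxlen :: "nat \<Rightarrow> nat \<Rightarrow> nat \<Rightarrow> nat \<Rightarrow> nat" where
  "maxlen n1 n2 n3 x = Max (flen ` Z n1 n2 n3 x)"

definition minlen :: "nat \<Rightarrow> nat \<Rightarrow> nat \<Rightarrow> nat \<Rightarrow> nat" where
  "minlen n1 n2 n3 x = Min (flen ` Z n1 n2 n3 x)"

definition fdot :: "fact3 \<Rightarrow> fact3 \<Rightarrow> nat" where
  "fdot v w = (case v of (a1, a2, a3) \<Rightarrow> case w of (b1, b2, b3) \<Rightarrow>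
      a1 * b1 + a2 * b2 + a3 * b3)"

definition nabla_edge :: "nat \<Rightarrow> nat \<Rightarrow> nat \<Rightarrow> nat \<Rightarrow> fact3 \<Rightarrow> fact3 \<Rightarrow> bool" where
  "nabla_edge n1 n2 n3 x v w \<longleftrightarrow>
     v \<in> Z n1 n2 n3 x \<and> w \<in> Z n1 n2 n3 x \<and> v \<noteq> w \<and> fdot v w \<noteq> 0"

definition betti :: "nat \<Rightarrow> nat \<Rightarrow> nat \<Rightarrow> nat \<Rightarrow> bool" where
  "betti n1 n2 n3 x \<longleftrightarrow> x \<in> gen_monoid n1 n2 n3 \<and>
     \<not> (\<forall>v \<in> Z n1 n2 n3 x. \<forall>w \<in> Z n1 n2 n3 x. (nabla_edge n1 n2 n3 x)\<^sup>*\<^sup>* v w)"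

definition fcomp :: "nat \<Rightarrow> fact3 \<Rightarrow> nat" where
  "fcomp i v = (case v of (a1, a2, a3) \<Rightarrow> if i = 1 then a1 else if i = 2 then a2 else a3)"

definition gen :: "nat \<Rightarrow> nat \<Rightarrow> nat \<Rightarrow> nat \<Rightarrow> nat" where
  "gen n1 n2 n3 i = (if i = 1 then n1 else if i = 2 then n2 else n3)"

definition cc :: "nat \<Rightarrow> nat \<Rightarrow> nat \<Rightarrow> nat \<Rightarrow> nat" where
  "cc n1 n2 n3 i = (LEAST k. 1 \<le> k \<and>
      (\<exists>v \<in> Z n1 n2 n3 (k * gen n1 n2 n3 i). fcomp i v = 0))"

end

theory Submission
  imports Defs
begin



lemma Z_mem[simp]: "(a,b,c) \<in> Z n1 n2 n3 x \<longleftrightarrow> a*n1 + b*n2 + c*n3 = x"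
  by (simp add: Z_def)

lemma cc_gen:
  fixes x y z :: nat
  assumes "0 < y"
    and "cc n1 n2 n3 i = (LEAST k. 1 \<le> k \<and> (\<exists>a b. k * x = a*y + b*z))"
  shows "1 \<le> cc n1 n2 n3 i \<and> (\<exists>a b. cc n1 n2 n3 i * x = a*y + b*z)
     \<and> (\<forall>k a b. k*x = a*y + b*z \<longrightarrow> k = 0 \<or> cc n1 n2 n3 i \<le> k)"
proof -
  let ?P = "\<lambda>k. 1 \<le> k \<and> (\<exists>a b. k * x = a*y + b*z)"
  have "y * x = x * y + 0 * z" by simp
  then have "\<exists>a b. y * x = a*y + b*z" by blast
  then have "?P y" using assms(1) by simp
  then have "?P (Least ?P)" by (rule LeastI)
  moreover have "\<forall>k a b. k*x = a*y + b*z \<longrightarrow> k = 0 \<or> Least ?P \<le> k"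
    by (metis (mono_tags, lifting) Least_le less_one not_le)
  ultimately show ?thesis using assms(2) by simp
qed

lemma ex1: "(\<exists>v\<in>Z n1 n2 n3 x. fcomp 1 v = 0) \<longleftrightarrow> (\<exists>a b. x = a*n2+b*n3)"
proof
  assume "\<exists>v\<in>Z n1 n2 n3 x. fcomp 1 v = 0"
  then obtain a b c where "(a,b,c) \<in> Z n1 n2 n3 x" "fcomp 1 (a,b,c) = 0" by auto
  then show "\<exists>a b. x = a*n2+b*n3" by (auto simp: fcomp_def)
next
  assume "\<exists>a b. x = a*n2+b*n3"
  then obtain a b where "x = a*n2+b*n3" by blast
  then have "(0,a,b) \<in> Z n1 n2 n3 x" "fcomp 1 (0,a,b) = 0" by (auto simp: fcomp_def)
  then show "\<exists>v\<in>Z n1 n2 n3 x. fcomp 1 v = 0" by blast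
qed

lemma ex2: "(\<exists>v\<in>Z n1 n2 n3 x. fcomp 2 v = 0) \<longleftrightarrow> (\<exists>a b. x = a*n1+b*n3)"
proof
  assume "\<exists>v\<in>Z n1 n2 n3 x. fcomp 2 v = 0"
  then obtain a b c where "(a,b,c) \<in> Z n1 n2 n3 x" "fcomp 2 (a,b,c) = 0" by auto
  then show "\<exists>a b. x = a*n1+b*n3" by (auto simp: fcomp_def)
next
  assume "\<exists>a b. x = a*n1+b*n3"
  then obtain a b where "x = a*n1+b*n3" by blast
  then have "(a,0,b) \<in> Z n1 n2 n3 x" "fcomp 2 (a,0,b) = 0" by (auto simp: fcomp_def)
  then show "\<exists>v\<in>Z n1 n2 n3 x. fcomp 2 v = 0" by blast
qed

lemma ex3: "(\<exists>v\<in>Z n1 n2 n3 x. fcomp 3 v = 0) \<longleftrightarrow> (\<exists>a b. x = a*n1+b*n2)"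
proof
  assume "\<exists>v\<in>Z n1 n2 n3 x. fcomp 3 v = 0"
  then obtain a b c where "(a,b,c) \<in> Z n1 n2 n3 x" "fcomp 3 (a,b,c) = 0" by auto
  then show "\<exists>a b. x = a*n1+b*n2" by (auto simp: fcomp_def)
next
  assume "\<exists>a b. x = a*n1+b*n2"
  then obtain a b where "x = a*n1+b*n2" by blast
  then have "(a,b,0) \<in> Z n1 n2 n3 x" "fcomp 3 (a,b,0) = 0" by (auto simp: fcomp_def)
  then show "\<exists>v\<in>Z n1 n2 n3 x. fcomp 3 v = 0" by blast
qed

lemma cc1_eq: "cc n1 n2 n3 1 = (LEAST k. 1 \<le> k \<and> (\<exists>a b. k * n1 = a*n2 + b*n3))"
  unfolding cc_def gen_def by (simp only: ex1) simp
lemma cc2_eq: "cc n1 n2 n3 2 = (LEAST k. 1 \<le> k \<and> (\<exists>a b. k * n2 = a*n1 + b*n3))"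
  unfolding cc_def gen_def by (simp only: ex2) simp
lemma cc3_eq: "cc n1 n2 n3 3 = (LEAST k. 1 \<le> k \<and> (\<exists>a b. k * n3 = a*n1 + b*n2))"
  unfolding cc_def gen_def by (simp only: ex3) simp

lemmas cc1 = cc_gen[OF _ cc1_eq]
lemmas cc2 = cc_gen[OF _ cc2_eq]
lemmas cc3 = cc_gen[OF _ cc3_eq]




definition tp :: "fact3 \<Rightarrow> bool" where
  "tp v = (case v of (a,b,c) \<Rightarrow> (0<a \<and> 0<b) \<or> (0<a \<and> 0<c) \<or> (0<b \<and> 0<c))"

lemma fdot_comm: "fdot v w = fdot w v"
  by (cases v; cases w) (simp add: fdot_def mult.commute)

lemma tp_dot: "tp u \<Longrightarrow> tp w \<Longrightarrow> fdot u w \<noteq> 0"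
  by (cases u; cases w) (auto simp: tp_def fdot_def)

lemma edge_conn:
  assumes "v \<in> Z n1 n2 n3 x" "w \<in> Z n1 n2 n3 x" "fdot v w \<noteq> 0"
  shows "(nabla_edge n1 n2 n3 x)\<^sup>*\<^sup>* v w"
proof (cases "v = w")
  case True then show ?thesis by simp
next
  case False
  then have "nabla_edge n1 n2 n3 x v w" using assms by (simp add: nabla_edge_def)
  then show ?thesis by blast
qed

lemma conn_sym:
  assumes "(nabla_edge n1 n2 n3 x)\<^sup>*\<^sup>* v w"
  shows "(nabla_edge n1 n2 n3 x)\<^sup>*\<^sup>* w v"
  using assms
proof (induction rule: rtranclp_induct)
  case base then show ?case by simp
next
  case (step y z)
  then have "nabla_edge n1 n2 n3 x z y" by (auto simp: nabla_edge_def fdot_comm)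
  then show ?case using step(3) by (meson converse_rtranclp_into_rtranclp)
qed

lemma sing_gen:
  fixes x y z k c :: nat
  assumes "0 < y" "0 < z" "N = k*x" "N = b*y + d*z" "N \<noteq> c*x" "N \<noteq> 0" "1 \<le> c"
    "c * x = p*y + q*z" "\<forall>k a b. k*x = a*y + b*z \<longrightarrow> k = 0 \<or> c \<le> k"
  shows "c < k \<and> N = (k - c)*x + p*y + q*z \<and> (0 < p \<or> 0 < q)"
proof -
  have "k = 0 \<or> c \<le> k" using assms(3,4,9) by metis
  moreover have "k \<noteq> 0" using assms(3,6) by auto
  moreover have "k \<noteq> c" using assms(3,5) by auto
  ultimately have ck: "c < k" by auto
  then have "k = (k - c) + c" by simp
  then have "k*x = (k-c)*x + c*x" by (metis add_mult_distrib)
  then have "N = (k - c)*x + p*y + q*z" using assms(3,8) by simp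
  moreover have "0 < p \<or> 0 < q"
  proof (rule ccontr)
    assume "\<not> (0 < p \<or> 0 < q)"
    then have "c * x = 0" using assms(8) by simp
    then have "x = 0" using assms(7) by simp
    then show False using assms(3,6) by simp
  qed
  ultimately show ?thesis using ck by simp
qed




lemma claim:
  assumes pos: "0<n1" "0<n2" "0<n3"
    and vw: "v \<in> Z n1 n2 n3 x" "w \<in> Z n1 n2 n3 x" "fdot v w = 0"
    and x: "x \<noteq> 0" "x \<noteq> cc n1 n2 n3 1 * n1" "x \<noteq> cc n1 n2 n3 2 * n2" "x \<noteq> cc n1 n2 n3 3 * n3"
  shows "\<exists>u\<in>Z n1 n2 n3 x. (nabla_edge n1 n2 n3 x)\<^sup>*\<^sup>* v u \<and> tp u"
proof -
  obtain a1 a2 a3 where v: "v = (a1,a2,a3)" by (cases v) auto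
  obtain b1 b2 b3 where w: "w = (b1,b2,b3)" by (cases w) auto
  have va: "a1*n1 + a2*n2 + a3*n3 = x" using vw(1) v by simp
  have wb: "b1*n1 + b2*n2 + b3*n3 = x" using vw(2) w by simp
  have d: "a1*b1 = 0" "a2*b2 = 0" "a3*b3 = 0" using vw(3) v w by (auto simp: fdot_def)
  consider "tp v" | "0<a1" "a2=0" "a3=0" | "0<a2" "a1=0" "a3=0" | "0<a3" "a1=0" "a2=0"
    | "a1=0" "a2=0" "a3=0" by (auto simp: tp_def v)
  then show ?thesis
  proof cases
    case 1 then show ?thesis using vw(1) by blast
  next
    case 2
    then have "b1 = 0" using d by simp
    obtain p q where pq: "cc n1 n2 n3 1 * n1 = p*n2 + q*n3" using cc1[OF pos(2)] by blast
    have s: "cc n1 n2 n3 1 < a1 \<and> x = (a1 - cc n1 n2 n3 1)*n1 + p*n2 + q*n3 \<and> (0 < p \<or> 0 < q)"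
      apply (rule sing_gen[OF pos(2,3), where b=b2 and d=b3])
      using 2 va wb \<open>b1 = 0\<close> x pq cc1[OF pos(2)] by auto
    let ?u = "(a1 - cc n1 n2 n3 1, p, q)"
    have "?u \<in> Z n1 n2 n3 x" using s by simp
    moreover have "tp ?u" using s by (auto simp: tp_def)
    moreover have "fdot v ?u \<noteq> 0" using s 2 by (simp add: v fdot_def)
    ultimately show ?thesis using edge_conn vw(1) by blast
  next
    case 3
    then have "b2 = 0" using d by simp
    obtain p q where pq: "cc n1 n2 n3 2 * n2 = p*n1 + q*n3" using cc2[OF pos(1)] by blast
    have s: "cc n1 n2 n3 2 < a2 \<and> x = (a2 - cc n1 n2 n3 2)*n2 + p*n1 + q*n3 \<and> (0 < p \<or> 0 < q)"
      apply (rule sing_gen[OF pos(1,3), where b=b1 and d=b3])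
      using 3 va wb \<open>b2 = 0\<close> x pq cc2[OF pos(1)] by auto
    let ?u = "(p, a2 - cc n1 n2 n3 2, q)"
    have "?u \<in> Z n1 n2 n3 x" using s by simp
    moreover have "tp ?u" using s by (auto simp: tp_def)
    moreover have "fdot v ?u \<noteq> 0" using s 3 by (simp add: v fdot_def)
    ultimately show ?thesis using edge_conn vw(1) by blast
  next
    case 4
    then have "b3 = 0" using d by simp
    obtain p q where pq: "cc n1 n2 n3 3 * n3 = p*n1 + q*n2" using cc3[OF pos(1)] by blast
    have s: "cc n1 n2 n3 3 < a3 \<and> x = (a3 - cc n1 n2 n3 3)*n3 + p*n1 + q*n2 \<and> (0 < p \<or> 0 < q)"
      apply (rule sing_gen[OF pos(1,2), where b=b1 and d=b2])
      using 4 va wb \<open>b3 = 0\<close> x pq cc3[OF pos(1)] by auto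
    let ?u = "(p, q, a3 - cc n1 n2 n3 3)"
    have "?u \<in> Z n1 n2 n3 x" using s by simp
    moreover have "tp ?u" using s by (auto simp: tp_def)
    moreover have "fdot v ?u \<noteq> 0" using s 4 by (simp add: v fdot_def)
    ultimately show ?thesis using edge_conn vw(1) by blast
  next
    case 5 then show ?thesis using va x by simp
  qed
qed

lemma betti_sub:
  assumes pos: "0<n1" "0<n2" "0<n3"
  shows "{x. betti n1 n2 n3 x} \<subseteq> {cc n1 n2 n3 1 * n1, cc n1 n2 n3 2 * n2, cc n1 n2 n3 3 * n3}"
proof
  fix x assume "x \<in> {x. betti n1 n2 n3 x}"
  then obtain v w where vw: "v \<in> Z n1 n2 n3 x" "w \<in> Z n1 n2 n3 x"
    and nc: "\<not> (nabla_edge n1 n2 n3 x)\<^sup>*\<^sup>* v w" by (auto simp: betti_def)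
  show "x \<in> {cc n1 n2 n3 1 * n1, cc n1 n2 n3 2 * n2, cc n1 n2 n3 3 * n3}"
  proof (rule ccontr)
    assume xn: "x \<notin> {cc n1 n2 n3 1 * n1, cc n1 n2 n3 2 * n2, cc n1 n2 n3 3 * n3}"
    have d0: "fdot v w = 0" using edge_conn[OF vw] nc by blast
    have "x \<noteq> 0"
    proof
      assume "x = 0"
      then have "v = (0,0,0)" "w = (0,0,0)" using vw pos by (cases v; cases w; auto)+
      then show False using nc by simp
    qed
    obtain u where u: "u \<in> Z n1 n2 n3 x" "(nabla_edge n1 n2 n3 x)\<^sup>*\<^sup>* v u" "tp u"
      using claim[OF pos vw d0 \<open>x \<noteq> 0\<close>] xn by auto
    have d1: "fdot w v = 0" using d0 fdot_comm by metis
    obtain u' where u': "u' \<in> Z n1 n2 n3 x" "(nabla_edge n1 n2 n3 x)\<^sup>*\<^sup>* w u'" "tp u'"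
      using claim[OF pos vw(2,1) d1 \<open>x \<noteq> 0\<close>] xn by auto
    have "(nabla_edge n1 n2 n3 x)\<^sup>*\<^sup>* u u'" using edge_conn[OF u(1) u'(1)] tp_dot u(3) u'(3) by blast
    moreover have "(nabla_edge n1 n2 n3 x)\<^sup>*\<^sup>* u' w" using conn_sym u'(2) by blast
    ultimately have "(nabla_edge n1 n2 n3 x)\<^sup>*\<^sup>* v w" using u(2) by (meson rtranclp_trans)
    then show False using nc by simp
  qed
qed

lemma card3_distinct:
  assumes "A \<subseteq> {a,b,c}" "card A = 3"
  shows "a \<noteq> b \<and> a \<noteq> c \<and> b \<noteq> c"
proof -
  have "card A \<le> card {a,b,c}" using assms(1) by (simp add: card_mono)
  then have "card {a,b,c} \<ge> 3" using assms(2) by simp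
  then show ?thesis by (auto simp: card_insert_if split: if_splits)
qed




lemma G:
  fixes x y z cx cy rxy rxz ryx ryz :: nat
  assumes e1: "cx*x = rxy*y + rxz*z" and e2: "cy*y = ryx*x + ryz*z" and le: "cy \<le> rxy"
    and M: "\<forall>k a b. k*x = a*y + b*z \<longrightarrow> k = 0 \<or> cx \<le> k"
    and D: "cx*x \<noteq> cy*y" and pos: "0<x" "0<y" "0<z"
  shows "ryx = 0"
proof -
  obtain d where d: "rxy = cy + d" using le le_iff_add by blast
  have h0: "cx*x = ryx*x + d*y + (rxz+ryz)*z" using e1 e2 d by (simp add: algebra_simps)
  then have "ryx*x \<le> cx*x" by linarith
  then have "ryx \<le> cx" using pos(1) by simp
  then obtain e where e: "cx = ryx + e" using le_iff_add by blast
  have h: "e*x = d*y + (rxz+ryz)*z" using h0 e by (simp add: algebra_simps)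
  from M h have "e = 0 \<or> cx \<le> e" by blast
  then show ?thesis
  proof
    assume "e = 0"
    then have "d*y + (rxz+ryz)*z = 0" using h by simp
    then have "d = 0" "rxz = 0" using pos by auto
    then have "cx*x = cy*y" using e1 d by simp
    then show ?thesis using D by simp
  next
    assume "cx \<le> e" with e show ?thesis by simp
  qed
qed

lemma stp:
  fixes x y z cy cz ryx ryz :: nat
  assumes e: "cy*y = ryx*x + ryz*z" and z: "ryx = 0" and c: "1 \<le> cy" and pos: "0 < y"
    and M: "\<forall>k a b. k*z = a*x + b*y \<longrightarrow> k = 0 \<or> cz \<le> k"
  shows "cz \<le> ryz"
proof -
  have "ryz*z = 0*x + cy*y" using e z by simp
  then have "ryz = 0 \<or> cz \<le> ryz" using M by blast
  moreover have "ryz \<noteq> 0"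
  proof
    assume "ryz = 0"
    then have "cy*y = 0" using e z by simp
    then show False using c pos by simp
  qed
  ultimately show ?thesis by simp
qed

lemma S:
  fixes x y z cx cy cz ryx ryz rzx rzy :: nat
  assumes e2: "cy*y = ryx*x + ryz*z" and e3: "cz*z = rzx*x + rzy*y"
    and l1: "rzy < cy" and l2: "ryz < cz"
    and M: "\<forall>k a b. k*x = a*y + b*z \<longrightarrow> k = 0 \<or> cx \<le> k" and pos: "0<y"
  shows "cx \<le> ryx + rzx"
proof -
  obtain p where p: "cy = rzy + p" "0 < p" using l1 by (metis add_diff_inverse_nat less_imp_le_nat not_less zero_less_diff)
  obtain q where q: "cz = ryz + q" using l2 by (metis add_diff_inverse_nat less_imp_le_nat not_less)
  have h: "(ryx + rzx)*x = p*y + q*z" using e2 e3 p q by (simp add: algebra_simps)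
  then have "ryx + rzx = 0 \<or> cx \<le> ryx + rzx" using M by blast
  moreover have "p*y > 0" using p pos by simp
  ultimately show ?thesis using h by auto
qed




locale three =
  fixes n1 n2 n3 c1 c2 c3 r12 r13 r21 r23 r31 r32 :: nat
  assumes pos: "0 < n1" "n1 < n2" "n2 < n3"
    and cpos: "1 \<le> c1" "1 \<le> c2" "1 \<le> c3"
    and e1: "c1*n1 = r12*n2 + r13*n3"
    and e2: "c2*n2 = r21*n1 + r23*n3"
    and e3: "c3*n3 = r31*n1 + r32*n2"
    and M1: "\<forall>k a b. k*n1 = a*n2 + b*n3 \<longrightarrow> k = 0 \<or> c1 \<le> k"
    and M2: "\<forall>k a b. k*n2 = a*n1 + b*n3 \<longrightarrow> k = 0 \<or> c2 \<le> k"
    and M3: "\<forall>k a b. k*n3 = a*n1 + b*n2 \<longrightarrow> k = 0 \<or> c3 \<le> k"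
    and D12: "c1*n1 \<noteq> c2*n2" and D13: "c1*n1 \<noteq> c3*n3" and D23: "c2*n2 \<noteq> c3*n3"
begin

lemma p: "0 < n1" "0 < n2" "0 < n3" using pos by auto

lemma M1': "\<forall>k a b. k*n1 = a*n3 + b*n2 \<longrightarrow> k = 0 \<or> c1 \<le> k" using M1 by (metis add.commute)
lemma M2': "\<forall>k a b. k*n2 = a*n3 + b*n1 \<longrightarrow> k = 0 \<or> c2 \<le> k" using M2 by (metis add.commute)
lemma M3': "\<forall>k a b. k*n3 = a*n2 + b*n1 \<longrightarrow> k = 0 \<or> c3 \<le> k" using M3 by (metis add.commute)
lemma e1': "c1*n1 = r13*n3 + r12*n2" using e1 by simp
lemma e2': "c2*n2 = r23*n3 + r21*n1" using e2 by simp
lemma e3': "c3*n3 = r32*n2 + r31*n1" using e3 by simp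

lemma G12: "c2 \<le> r12 \<Longrightarrow> r21 = 0" by (rule G[OF e1 e2 _ M1 D12 p(1,2,3)])
lemma G21: "c1 \<le> r21 \<Longrightarrow> r12 = 0" by (rule G[OF e2 e1 _ M2 D12[symmetric] p(2,1,3)])
lemma G13: "c3 \<le> r13 \<Longrightarrow> r31 = 0" by (rule G[OF e1' e3 _ M1' D13 p(1,3,2)])
lemma G31: "c1 \<le> r31 \<Longrightarrow> r13 = 0" by (rule G[OF e3 e1' _ M3 D13[symmetric] p(3,1,2)])
lemma G23: "c3 \<le> r23 \<Longrightarrow> r32 = 0" by (rule G[OF e2' e3' _ M2' D23 p(2,3,1)])
lemma G32: "c2 \<le> r32 \<Longrightarrow> r23 = 0" by (rule G[OF e3' e2' _ M3' D23[symmetric] p(3,2,1)])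

lemma S21: "r21 = 0 \<Longrightarrow> c3 \<le> r23" by (rule stp[OF e2 _ cpos(2) p(2) M3])
lemma S32: "r32 = 0 \<Longrightarrow> c1 \<le> r31" by (rule stp[OF e3' _ cpos(3) p(3) M1])
lemma S13: "r13 = 0 \<Longrightarrow> c2 \<le> r12" by (rule stp[OF e1' _ cpos(1) p(1) M2'])
lemma S31: "r31 = 0 \<Longrightarrow> c2 \<le> r32" by (rule stp[OF e3 _ cpos(3) p(3) M2])
lemma S23: "r23 = 0 \<Longrightarrow> c1 \<le> r21" by (rule stp[OF e2' _ cpos(2) p(2) M1'])
lemma S12: "r12 = 0 \<Longrightarrow> c3 \<le> r13" by (rule stp[OF e1 _ cpos(1) p(1) M3'])

lemma cycA: "\<not> (c2 \<le> r12 \<or> c3 \<le> r23 \<or> c1 \<le> r31)"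
proof
  assume "c2 \<le> r12 \<or> c3 \<le> r23 \<or> c1 \<le> r31"
  then have all: "c2 \<le> r12" "c3 \<le> r23" "c1 \<le> r31" "r21 = 0" "r32 = 0" "r13 = 0"
    using G12 G23 G31 S21 S32 S13 by blast+
  have "c1*n1 = r12*n2" using e1 all by simp
  also have "\<dots> \<ge> c2*n2" using all by simp
  finally have a: "c2*n2 \<le> c1*n1" .
  have "c2*n2 = r23*n3" using e2 all by simp
  also have "\<dots> \<ge> c3*n3" using all by simp
  finally have b: "c3*n3 \<le> c2*n2" .
  have "c3*n3 = r31*n1" using e3 all by simp
  also have "\<dots> \<ge> c1*n1" using all by simp
  finally have c: "c1*n1 \<le> c3*n3" .
  from a b c D12 show False by simp
qed

lemma cycB: "\<not> (c3 \<le> r13 \<or> c2 \<le> r32 \<or> c1 \<le> r21)"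
proof
  assume "c3 \<le> r13 \<or> c2 \<le> r32 \<or> c1 \<le> r21"
  then have all: "c3 \<le> r13" "c2 \<le> r32" "c1 \<le> r21" "r31 = 0" "r23 = 0" "r12 = 0"
    using G13 G32 G21 S31 S23 S12 by blast+
  have "c1*n1 = r13*n3" using e1 all by simp
  also have "\<dots> \<ge> c3*n3" using all by simp
  finally have a: "c3*n3 \<le> c1*n1" .
  have "c3*n3 = r32*n2" using e3 all by simp
  also have "\<dots> \<ge> c2*n2" using all by simp
  finally have b: "c2*n2 \<le> c3*n3" .
  have "c2*n2 = r21*n1" using e2 all by simp
  also have "\<dots> \<ge> c1*n1" using all by simp
  finally have c: "c1*n1 \<le> c2*n2" .
  from a b c D13 show False by simp
qed

lemma lts: "r12 < c2" "r23 < c3" "r31 < c1" "r13 < c3" "r32 < c2" "r21 < c1"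
  using cycA cycB by auto

lemma rpos: "0 < r12" "0 < r23" "0 < r31" "0 < r13" "0 < r32" "0 < r21"
  using lts S12 S23 S31 S13 S32 S21 by (metis not_le neq0_conv)+

lemma herzog: "c1 = r21 + r31" "c2 = r12 + r32" "c3 = r13 + r23"
proof -
  have h1: "c1 \<le> r21 + r31" by (rule S[OF e2 e3 lts(5) lts(2) M1 p(2)])
  have h2: "c2 \<le> r12 + r32" by (rule S[OF e1 e3' lts(3) lts(4) M2 p(1)])
  have h3: "c3 \<le> r13 + r23" by (rule S[OF e1' e2' lts(6) lts(1) M3 p(1)])
  obtain d1 where d1: "r21 + r31 = c1 + d1" using h1 le_iff_add by blast
  obtain d2 where d2: "r12 + r32 = c2 + d2" using h2 le_iff_add by blast
  obtain d3 where d3: "r13 + r23 = c3 + d3" using h3 le_iff_add by blast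
  have "c1*n1 + c2*n2 + c3*n3 = (r21 + r31)*n1 + (r12 + r32)*n2 + (r13 + r23)*n3"
    using e1 e2 e3 by (simp add: algebra_simps)
  then have "d1*n1 + d2*n2 + d3*n3 = 0" using d1 d2 d3 by (simp add: algebra_simps)
  then have "d1 = 0" "d2 = 0" "d3 = 0" using p by auto
  then show "c1 = r21 + r31" "c2 = r12 + r32" "c3 = r13 + r23" using d1 d2 d3 by auto
qed

lemma ord1: "r12 + r13 \<le> c1"
proof -
  have "(r12 + r13)*n1 \<le> r12*n2 + r13*n3" using pos
    by (simp add: add_mult_distrib add_mono)
  then have "(r12 + r13)*n1 \<le> c1*n1" using e1 by simp
  then show ?thesis using p by simp
qed

lemma ord3: "c3 \<le> r31 + r32"
proof -
  have "r31*n1 + r32*n2 \<le> (r31 + r32)*n3" using pos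
    by (simp add: add_mult_distrib add_mono)
  then have "c3*n3 \<le> (r31 + r32)*n3" using e3 by simp
  then show ?thesis using p by simp
qed

end



lemma Kb:
  fixes x y z cx cy cz rxy rxz k a b :: nat
  assumes ex: "cx*x = rxy*y + rxz*z"
    and Mx: "\<forall>k a b. k*x = a*y + b*z \<longrightarrow> k = 0 \<or> cx \<le> k"
    and My: "\<forall>k a b. k*y = a*x + b*z \<longrightarrow> k = 0 \<or> cy \<le> k"
    and Mz: "\<forall>k a b. k*z = a*x + b*y \<longrightarrow> k = 0 \<or> cz \<le> k"
    and pos: "0<x" "0<y" "0<z" and k: "1 \<le> k" and h: "k*x = a*y + b*z"
    and ab: "a < cy" "b < cz"
  shows "rxy \<le> a \<and> rxz \<le> b"
proof -
  have "k = 0 \<or> cx \<le> k" using Mx h by blast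
  then have "cx \<le> k" using k by simp
  then obtain \<kappa> where kk: "k = cx + \<kappa>" using le_iff_add by blast
  consider (c1) "a < rxy" "b < rxz" | (c2) "a < rxy" "rxz \<le> b" | (c3) "rxy \<le> a" "b < rxz"
    | (c4) "rxy \<le> a" "rxz \<le> b" by linarith
  then show ?thesis
  proof cases
    case c1
    have "a*y < rxy*y" using c1 pos by simp
    moreover have "b*z \<le> rxz*z" using c1 by simp
    ultimately have "a*y + b*z < cx*x" using ex by linarith
    moreover have "cx*x \<le> k*x" using \<open>cx \<le> k\<close> by simp
    ultimately show ?thesis using h by linarith
  next
    case c2
    obtain \<alpha> where al: "rxy = a + \<alpha>" "0 < \<alpha>" using c2 by (metis add_diff_inverse_nat less_imp_le_nat not_less zero_less_diff)
    obtain \<beta> where be: "b = rxz + \<beta>" using c2 le_iff_add by blast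
    have "cx*x + \<kappa>*x = a*y + rxz*z + \<beta>*z" using h kk be by (simp add: algebra_simps)
    moreover have "cx*x = a*y + \<alpha>*y + rxz*z" using ex al by (simp add: algebra_simps)
    ultimately have e: "\<beta>*z = \<kappa>*x + \<alpha>*y" by linarith
    then have "\<beta> = 0 \<or> cz \<le> \<beta>" using Mz by blast
    moreover have "\<beta> \<noteq> 0"
    proof
      assume "\<beta> = 0"
      then have "\<alpha>*y = 0" using e by simp
      then show False using al pos by simp
    qed
    ultimately show ?thesis using be ab by linarith
  next
    case c3
    obtain \<beta> where be: "rxz = b + \<beta>" "0 < \<beta>" using c3 by (metis add_diff_inverse_nat less_imp_le_nat not_less zero_less_diff)
    obtain \<alpha> where al: "a = rxy + \<alpha>" using c3 le_iff_add by blast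
    have "cx*x + \<kappa>*x = rxy*y + \<alpha>*y + b*z" using h kk al by (simp add: algebra_simps)
    moreover have "cx*x = rxy*y + b*z + \<beta>*z" using ex be by (simp add: algebra_simps)
    ultimately have e: "\<alpha>*y = \<kappa>*x + \<beta>*z" by linarith
    then have "\<alpha> = 0 \<or> cy \<le> \<alpha>" using My by blast
    moreover have "\<alpha> \<noteq> 0"
    proof
      assume "\<alpha> = 0"
      then have "\<beta>*z = 0" using e by simp
      then show False using be pos by simp
    qed
    ultimately show ?thesis using al ab by linarith
  next
    case c4 then show ?thesis by simp
  qed
qed

lemma K:
  fixes x y z cx cy cz rxy rxz k a b p q :: nat
  assumes ex: "cx*x = rxy*y + rxz*z"
    and Mx: "\<forall>k a b. k*x = a*y + b*z \<longrightarrow> k = 0 \<or> cx \<le> k"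
    and My: "\<forall>k a b. k*y = a*x + b*z \<longrightarrow> k = 0 \<or> cy \<le> k"
    and Mz: "\<forall>k a b. k*z = a*x + b*y \<longrightarrow> k = 0 \<or> cz \<le> k"
    and pos: "0<x" "0<y" "0<z" and k: "1 \<le> k" and h: "k*x + p*y + q*z = a*y + b*z"
    and ab: "a < cy" "b < cz"
  shows "rxy \<le> a \<and> rxz \<le> b"
proof -
  have kx: "0 < k*x" using k pos by simp
  consider (c1) "p \<le> a" "q \<le> b" | (c2) "a < p" | (c3) "p \<le> a" "b < q" by linarith
  then show ?thesis
  proof cases
    case c1
    obtain a' where a': "a = p + a'" using c1 le_iff_add by blast
    obtain b' where b': "b = q + b'" using c1 le_iff_add by blast
    have "k*x = a'*y + b'*z" using h a' b' by (simp add: algebra_simps)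
    moreover have "a' < cy" "b' < cz" using ab a' b' by auto
    ultimately have "rxy \<le> a' \<and> rxz \<le> b'"
      by (rule Kb[OF ex Mx My Mz pos k])
    then show ?thesis using a' b' by simp
  next
    case c2
    obtain \<alpha> where al: "p = a + \<alpha>" using c2 by (metis less_imp_le_nat le_iff_add)
    have e0: "k*x + \<alpha>*y + q*z = b*z" using h al by (simp add: algebra_simps)
    then have "q*z \<le> b*z" by linarith
    then have "q \<le> b" using pos by simp
    then obtain \<beta> where be: "b = q + \<beta>" using le_iff_add by blast
    have e: "\<beta>*z = k*x + \<alpha>*y" using e0 be by (simp add: algebra_simps)
    then have "\<beta> = 0 \<or> cz \<le> \<beta>" using Mz by blast
    moreover have "\<beta> \<noteq> 0"
    proof
      assume "\<beta> = 0"
      then have "k*x = 0" using e by simp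
      then show False using kx by simp
    qed
    ultimately show ?thesis using be ab by linarith
  next
    case c3
    obtain \<beta> where be: "q = b + \<beta>" using c3 by (metis less_imp_le_nat le_iff_add)
    have e0: "k*x + p*y + \<beta>*z = a*y" using h be by (simp add: algebra_simps)
    obtain \<alpha> where al: "a = p + \<alpha>" using c3 le_iff_add by blast
    have e: "\<alpha>*y = k*x + \<beta>*z" using e0 al by (simp add: algebra_simps)
    then have "\<alpha> = 0 \<or> cy \<le> \<alpha>" using My by blast
    moreover have "\<alpha> \<noteq> 0"
    proof
      assume "\<alpha> = 0"
      then have "k*x = 0" using e by simp
      then show False using kx by simp
    qed
    ultimately show ?thesis using al ab by linarith
  qed
qed

context three begin

lemma K1: "1 \<le> k \<Longrightarrow> k*n1 + p*n2 + q*n3 = a*n2 + b*n3 \<Longrightarrow> a < c2 \<Longrightarrow> b < c3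
   \<Longrightarrow> r12 \<le> a \<and> r13 \<le> b"
  by (rule K[OF e1 M1 M2 M3 p(1,2,3)])

lemma K3: "1 \<le> k \<Longrightarrow> k*n3 + p*n1 + q*n2 = a*n1 + b*n2 \<Longrightarrow> a < c1 \<Longrightarrow> b < c2
   \<Longrightarrow> r31 \<le> a \<and> r32 \<le> b"
  by (rule K[OF e3 M3 M1' M2' p(3,1,2)])

lemma ZC2:
  assumes h: "p*n1 + q*n2 + s*n3 = c2*n2"
  shows "(p = 0 \<and> q = c2 \<and> s = 0) \<or> (p = r21 \<and> q = 0 \<and> s = r23)"
proof -
  have "q*n2 \<le> c2*n2" using h by linarith
  then have "q \<le> c2" using p by simp
  then obtain t where t: "c2 = q + t" using le_iff_add by blast
  have ht: "t*n2 = p*n1 + s*n3" using h t by (simp add: algebra_simps)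
  show ?thesis
  proof (cases "t = 0")
    case True
    then show ?thesis using ht t p by auto
  next
    case False
    then have "c2 \<le> t" using M2 ht by blast
    then have q0: "q = 0" using t by simp
    have hh: "p*n1 + s*n3 = r21*n1 + r23*n3" using h q0 e2 by simp
    consider "p = r21" | "r21 < p" | "p < r21" by linarith
    then show ?thesis
    proof cases
      case 1 then have "s*n3 = r23*n3" using hh by simp
      then show ?thesis using 1 q0 p by simp
    next
      case 2
      then obtain u where u: "p = r21 + u" "0 < u" by (metis add_diff_inverse_nat less_imp_le_nat not_less zero_less_diff)
      have e: "u*n1 + s*n3 = r23*n3" using hh u by (simp add: algebra_simps)
      then have "s*n3 \<le> r23*n3" by linarith
      then have "s \<le> r23" using p by simp
      then obtain w where w: "r23 = s + w" using le_iff_add by blast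
      have "w*n3 = u*n1 + 0*n2" using e w by (simp add: algebra_simps)
      then have "w = 0 \<or> c3 \<le> w" using M3 by blast
      moreover have "w \<noteq> 0"
      proof
        assume "w = 0"
        then have "u*n1 = 0" using \<open>w*n3 = u*n1 + 0*n2\<close> by simp
        then show False using u p by simp
      qed
      ultimately show ?thesis using w lts(2) by linarith
    next
      case 3
      then obtain u where u: "r21 = p + u" "0 < u" by (metis add_diff_inverse_nat less_imp_le_nat not_less zero_less_diff)
      have e: "s*n3 = u*n1 + r23*n3" using hh u by (simp add: algebra_simps)
      then have "r23*n3 \<le> s*n3" by linarith
      then have "r23 \<le> s" using p by simp
      then obtain w where w: "s = r23 + w" using le_iff_add by blast
      have "u*n1 = 0*n2 + w*n3" using e w by (simp add: algebra_simps)
      then have "u = 0 \<or> c1 \<le> u" using M1 by blast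
      then show ?thesis using u lts(6) by linarith
    qed
  qed
qed

end



lemma Z_fin:
  assumes "0<n1" "0<n2" "0<n3"
  shows "finite (Z n1 n2 n3 x)"
proof -
  have "Z n1 n2 n3 x \<subseteq> {..x} \<times> {..x} \<times> {..x}"
  proof
    fix v assume v: "v \<in> Z n1 n2 n3 x"
    obtain a b c where vv: "v = (a,b,c)" by (cases v) auto
    have e: "a*n1 + b*n2 + c*n3 = x" using v vv by simp
    have "a \<le> a*n1" "b \<le> b*n2" "c \<le> c*n3" using assms by simp_all
    then have "a \<le> x" "b \<le> x" "c \<le> x" using e by linarith+
    then show "v \<in> {..x} \<times> {..x} \<times> {..x}" using vv by simp
  qed
  then show ?thesis by (rule finite_subset) auto
qed

lemma max_ge: "0<n1 \<Longrightarrow> 0<n2 \<Longrightarrow> 0<n3 \<Longrightarrow> v \<in> Z n1 n2 n3 x \<Longrightarrow> flen v \<le> maxlen n1 n2 n3 x"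
proof -
  assume a: "0<n1" "0<n2" "0<n3" "v \<in> Z n1 n2 n3 x"
  have "finite (flen ` Z n1 n2 n3 x)" using Z_fin[OF a(1,2,3)] by (rule finite_imageI)
  moreover have "flen v \<in> flen ` Z n1 n2 n3 x" using a(4) by (rule imageI)
  ultimately show ?thesis unfolding maxlen_def by (rule Max_ge)
qed

lemma min_le: "0<n1 \<Longrightarrow> 0<n2 \<Longrightarrow> 0<n3 \<Longrightarrow> v \<in> Z n1 n2 n3 x \<Longrightarrow> minlen n1 n2 n3 x \<le> flen v"
proof -
  assume a: "0<n1" "0<n2" "0<n3" "v \<in> Z n1 n2 n3 x"
  have "finite (flen ` Z n1 n2 n3 x)" using Z_fin[OF a(1,2,3)] by (rule finite_imageI)
  moreover have "flen v \<in> flen ` Z n1 n2 n3 x" using a(4) by (rule imageI)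
  ultimately show ?thesis unfolding minlen_def by (rule Min_le)
qed

lemma max_in: "0<n1 \<Longrightarrow> 0<n2 \<Longrightarrow> 0<n3 \<Longrightarrow> x \<in> gen_monoid n1 n2 n3 \<Longrightarrow>
   \<exists>v\<in>Z n1 n2 n3 x. flen v = maxlen n1 n2 n3 x"
proof -
  assume a: "0<n1" "0<n2" "0<n3" "x \<in> gen_monoid n1 n2 n3"
  have "finite (flen ` Z n1 n2 n3 x)" using Z_fin[OF a(1,2,3)] by (rule finite_imageI)
  moreover have "flen ` Z n1 n2 n3 x \<noteq> {}" using a(4) by (simp add: gen_monoid_def)
  ultimately have "Max (flen ` Z n1 n2 n3 x) \<in> flen ` Z n1 n2 n3 x" by (rule Max_in)
  then show ?thesis unfolding maxlen_def by auto
qed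

lemma min_in: "0<n1 \<Longrightarrow> 0<n2 \<Longrightarrow> 0<n3 \<Longrightarrow> x \<in> gen_monoid n1 n2 n3 \<Longrightarrow>
   \<exists>v\<in>Z n1 n2 n3 x. flen v = minlen n1 n2 n3 x"
proof -
  assume a: "0<n1" "0<n2" "0<n3" "x \<in> gen_monoid n1 n2 n3"
  have "finite (flen ` Z n1 n2 n3 x)" using Z_fin[OF a(1,2,3)] by (rule finite_imageI)
  moreover have "flen ` Z n1 n2 n3 x \<noteq> {}" using a(4) by (simp add: gen_monoid_def)
  ultimately have "Min (flen ` Z n1 n2 n3 x) \<in> flen ` Z n1 n2 n3 x" by (rule Min_in)
  then show ?thesis unfolding minlen_def by auto
qed

lemma flen3[simp]: "flen (a,b,c) = a + b + c" by (simp add: flen_def)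

lemma gm_mem: "(a,b,c) \<in> Z n1 n2 n3 x \<Longrightarrow> x \<in> gen_monoid n1 n2 n3"
  unfolding gen_monoid_def by blast

context three begin

lemma Ex1:
  assumes c: "c2 \<le> r21 + r23" and ha: "a1*n1 + a2*n2 + a3*n3 = y"
    and hw: "w1*n1 + w2*n2 + w3*n3 + n1 = y"
  shows "\<exists>b1 b2 b3. 1 \<le> b1 \<and> b1*n1 + b2*n2 + b3*n3 = y \<and> a1 + a2 + a3 \<le> b1 + b2 + b3"
proof (cases "1 \<le> a1")
  case True then show ?thesis using ha by blast
next
  case False
  then have a10: "a1 = 0" by simp
  consider (A) "c2 \<le> a2" | (B) "c3 \<le> a3" | (C) "r12 \<le> a2" "r13 \<le> a3"
    | (N) "a2 < c2" "a3 < c3" "\<not> (r12 \<le> a2 \<and> r13 \<le> a3)" by linarith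
  then show ?thesis
  proof cases
    case A
    then obtain d where d: "a2 = c2 + d" using le_iff_add by blast
    have "r21*n1 + d*n2 + (a3 + r23)*n3 = y" using ha a10 d e2 by (simp add: algebra_simps)
    moreover have "a1 + a2 + a3 \<le> r21 + d + (a3 + r23)" using a10 d c by simp
    ultimately show ?thesis using rpos(6) by (metis One_nat_def Suc_leI)
  next
    case B
    then obtain d where d: "a3 = c3 + d" using le_iff_add by blast
    have "r31*n1 + (a2 + r32)*n2 + d*n3 = y" using ha a10 d e3 by (simp add: algebra_simps)
    moreover have "a1 + a2 + a3 \<le> r31 + (a2 + r32) + d" using a10 d ord3 by simp
    ultimately show ?thesis using rpos(3) by (metis One_nat_def Suc_leI)
  next
    case C
    then obtain d f where d: "a2 = r12 + d" "a3 = r13 + f" using le_iff_add by metis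
    have "c1*n1 + d*n2 + f*n3 = y" using ha a10 d e1 by (simp add: algebra_simps)
    moreover have "a1 + a2 + a3 \<le> c1 + d + f" using a10 d ord1 by simp
    ultimately show ?thesis using cpos(1) by blast
  next
    case N
    have "(w1+1)*n1 + w2*n2 + w3*n3 = a2*n2 + a3*n3" using ha hw a10 by (simp add: algebra_simps)
    then have "r12 \<le> a2 \<and> r13 \<le> a3" using K1[of "w1+1"] N by simp
    then show ?thesis using N by simp
  qed
qed

lemma Ex3:
  assumes c: "r21 + r23 \<le> c2" and ha: "a1*n1 + a2*n2 + a3*n3 = y"
    and hw: "w1*n1 + w2*n2 + w3*n3 + n3 = y"
  shows "\<exists>b1 b2 b3. 1 \<le> b3 \<and> b1*n1 + b2*n2 + b3*n3 = y \<and> b1 + b2 + b3 \<le> a1 + a2 + a3"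
proof (cases "1 \<le> a3")
  case True then show ?thesis using ha by blast
next
  case False
  then have a30: "a3 = 0" by simp
  consider (A) "c2 \<le> a2" | (B) "c1 \<le> a1" | (C) "r31 \<le> a1" "r32 \<le> a2"
    | (N) "a1 < c1" "a2 < c2" "\<not> (r31 \<le> a1 \<and> r32 \<le> a2)" by linarith
  then show ?thesis
  proof cases
    case A
    then obtain d where d: "a2 = c2 + d" using le_iff_add by blast
    have "(a1 + r21)*n1 + d*n2 + r23*n3 = y" using ha a30 d e2 by (simp add: algebra_simps)
    moreover have "(a1 + r21) + d + r23 \<le> a1 + a2 + a3" using a30 d c by simp
    ultimately show ?thesis using rpos(2) by (metis One_nat_def Suc_leI)
  next
    case B
    then obtain d where d: "a1 = c1 + d" using le_iff_add by blast
    have "d*n1 + (a2 + r12)*n2 + r13*n3 = y" using ha a30 d e1 by (simp add: algebra_simps)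
    moreover have "d + (a2 + r12) + r13 \<le> a1 + a2 + a3" using a30 d ord1 by simp
    ultimately show ?thesis using rpos(4) by (metis One_nat_def Suc_leI)
  next
    case C
    then obtain d f where d: "a1 = r31 + d" "a2 = r32 + f" using le_iff_add by metis
    have "d*n1 + f*n2 + c3*n3 = y" using ha a30 d e3 by (simp add: algebra_simps)
    moreover have "d + f + c3 \<le> a1 + a2 + a3" using a30 d ord3 by simp
    ultimately show ?thesis using cpos(3) by blast
  next
    case N
    have "(w3+1)*n3 + w1*n1 + w2*n2 = a1*n1 + a2*n2" using ha hw a30 by (simp add: algebra_simps)
    then have "r31 \<le> a1 \<and> r32 \<le> a2" using K3[of "w3+1"] N by simp
    then show ?thesis using N by simp
  qed
qed

end



context three begin

lemma part1_if:
  assumes c: "c2 \<le> r21 + r23" and x: "x \<in> gen_monoid n1 n2 n3"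
  shows "maxlen n1 n2 n3 (x+n1) = maxlen n1 n2 n3 x + 1"
proof -
  obtain v where v: "v \<in> Z n1 n2 n3 x" "flen v = maxlen n1 n2 n3 x" using max_in[OF p x] by blast
  obtain v1 v2 v3 where vv: "v = (v1,v2,v3)" by (cases v) auto
  have hv: "v1*n1 + v2*n2 + v3*n3 = x" using v(1) vv by simp
  have "(v1+1, v2, v3) \<in> Z n1 n2 n3 (x+n1)" using hv by (simp add: algebra_simps)
  then have ge: "maxlen n1 n2 n3 x + 1 \<le> maxlen n1 n2 n3 (x+n1)"
    using max_ge[OF p] v(2) vv by fastforce
  have "x + n1 \<in> gen_monoid n1 n2 n3" using gm_mem \<open>(v1+1, v2, v3) \<in> Z n1 n2 n3 (x+n1)\<close> by blast
  then obtain z where z: "z \<in> Z n1 n2 n3 (x+n1)" "flen z = maxlen n1 n2 n3 (x+n1)" using max_in[OF p] by blast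
  obtain a1 a2 a3 where zz: "z = (a1,a2,a3)" by (cases z) auto
  have hz: "a1*n1 + a2*n2 + a3*n3 = x + n1" using z(1) zz by simp
  obtain b1 b2 b3 where b: "1 \<le> b1" "b1*n1 + b2*n2 + b3*n3 = x + n1" "a1 + a2 + a3 \<le> b1 + b2 + b3"
    using Ex1[OF c hz, of v1 v2 v3] hv by auto
  obtain b' where b': "b1 = Suc b'" using b(1) by (cases b1) auto
  have "(b', b2, b3) \<in> Z n1 n2 n3 x" using b(2) b' by simp
  then have "b' + b2 + b3 \<le> maxlen n1 n2 n3 x" using max_ge[OF p] by fastforce
  then have "maxlen n1 n2 n3 (x+n1) \<le> maxlen n1 n2 n3 x + 1" using z(2) zz b(3) b' by simp
  then show ?thesis using ge by simp
qed

lemma part1_onlyif: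
  assumes H: "\<forall>x\<in>gen_monoid n1 n2 n3. maxlen n1 n2 n3 (x+n1) = maxlen n1 n2 n3 x + 1"
  shows "r12 + r32 \<le> r21 + r23"
proof (rule ccontr)
  assume "\<not> r12 + r32 \<le> r21 + r23"
  then have lt: "r21 + r23 < c2" using herzog(2) by simp
  obtain s where s: "r21 = Suc s" using rpos(6) by (cases r21) auto
  define x where "x = s*n1 + r23*n3"
  have "(s, 0, r23) \<in> Z n1 n2 n3 x" by (simp add: x_def)
  then have xm: "x \<in> gen_monoid n1 n2 n3" by (rule gm_mem)
  have xn: "x + n1 = c2*n2" using e2 s by (simp add: x_def algebra_simps)
  have "(0, c2, 0) \<in> Z n1 n2 n3 (x+n1)" using xn by simp
  then have c2le: "c2 \<le> maxlen n1 n2 n3 (x+n1)" using max_ge[OF p] by fastforce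
  obtain v where v: "v \<in> Z n1 n2 n3 x" "flen v = maxlen n1 n2 n3 x" using max_in[OF p xm] by blast
  obtain q1 q2 q3 where vv: "v = (q1,q2,q3)" by (cases v) auto
  have "(q1+1)*n1 + q2*n2 + q3*n3 = c2*n2" using v(1) vv xn by (simp add: algebra_simps)
  then have "q1 + 1 = r21 \<and> q2 = 0 \<and> q3 = r23" using ZC2 by fastforce
  then have "maxlen n1 n2 n3 x + 1 = r21 + r23" using v(2) vv by simp
  then show False using H xm c2le lt by auto
qed

lemma part2_if:
  assumes c: "r21 + r23 \<le> c2" and x: "x \<in> gen_monoid n1 n2 n3"
  shows "minlen n1 n2 n3 (x+n3) = minlen n1 n2 n3 x + 1"
proof -
  obtain v where v: "v \<in> Z n1 n2 n3 x" "flen v = minlen n1 n2 n3 x" using min_in[OF p x] by blast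
  obtain v1 v2 v3 where vv: "v = (v1,v2,v3)" by (cases v) auto
  have hv: "v1*n1 + v2*n2 + v3*n3 = x" using v(1) vv by simp
  have "(v1, v2, v3+1) \<in> Z n1 n2 n3 (x+n3)" using hv by (simp add: algebra_simps)
  then have le: "minlen n1 n2 n3 (x+n3) \<le> minlen n1 n2 n3 x + 1"
    using min_le[OF p] v(2) vv by fastforce
  have "x + n3 \<in> gen_monoid n1 n2 n3" using gm_mem \<open>(v1, v2, v3+1) \<in> Z n1 n2 n3 (x+n3)\<close> by blast
  then obtain z where z: "z \<in> Z n1 n2 n3 (x+n3)" "flen z = minlen n1 n2 n3 (x+n3)" using min_in[OF p] by blast
  obtain a1 a2 a3 where zz: "z = (a1,a2,a3)" by (cases z) auto
  have hz: "a1*n1 + a2*n2 + a3*n3 = x + n3" using z(1) zz by simp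
  obtain b1 b2 b3 where b: "1 \<le> b3" "b1*n1 + b2*n2 + b3*n3 = x + n3" "b1 + b2 + b3 \<le> a1 + a2 + a3"
    using Ex3[OF c hz, of v1 v2 v3] hv by auto
  obtain b' where b': "b3 = Suc b'" using b(1) by (cases b3) auto
  have "(b1, b2, b') \<in> Z n1 n2 n3 x" using b(2) b' by simp
  then have "minlen n1 n2 n3 x \<le> b1 + b2 + b'" using min_le[OF p] by fastforce
  then have "minlen n1 n2 n3 x + 1 \<le> minlen n1 n2 n3 (x+n3)" using z(2) zz b(3) b' by simp
  then show ?thesis using le by simp
qed

lemma part2_onlyif:
  assumes H: "\<forall>x\<in>gen_monoid n1 n2 n3. minlen n1 n2 n3 (x+n3) = minlen n1 n2 n3 x + 1"
  shows "r21 + r23 \<le> r12 + r32"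
proof (rule ccontr)
  assume "\<not> r21 + r23 \<le> r12 + r32"
  then have lt: "c2 < r21 + r23" using herzog(2) by simp
  obtain s where s: "r23 = Suc s" using rpos(2) by (cases r23) auto
  define x where "x = r21*n1 + s*n3"
  have "(r21, 0, s) \<in> Z n1 n2 n3 x" by (simp add: x_def)
  then have xm: "x \<in> gen_monoid n1 n2 n3" by (rule gm_mem)
  have xn: "x + n3 = c2*n2" using e2 s by (simp add: x_def algebra_simps)
  have "(0, c2, 0) \<in> Z n1 n2 n3 (x+n3)" using xn by simp
  then have c2le: "minlen n1 n2 n3 (x+n3) \<le> c2" using min_le[OF p] by fastforce
  obtain v where v: "v \<in> Z n1 n2 n3 x" "flen v = minlen n1 n2 n3 x" using min_in[OF p xm] by blast
  obtain q1 q2 q3 where vv: "v = (q1,q2,q3)" by (cases v) auto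
  have "q1*n1 + q2*n2 + (q3+1)*n3 = c2*n2" using v(1) vv xn by (simp add: algebra_simps)
  then have "q1 = r21 \<and> q2 = 0 \<and> q3 + 1 = r23" using ZC2 by fastforce
  then have "minlen n1 n2 n3 x + 1 = r21 + r23" using v(2) vv by simp
  then show False using H xm c2le lt by auto
qed

end

theorem mainTheorem7:
  fixes n1 n2 n3 r12 r13 r21 r23 r31 r32 :: nat
  assumes "emb_dim3 n1 n2 n3"
    and "card {x. betti n1 n2 n3 x} = 3"
    and "cc n1 n2 n3 1 * n1 = r12 * n2 + r13 * n3"
    and "cc n1 n2 n3 2 * n2 = r21 * n1 + r23 * n3"
    and "cc n1 n2 n3 3 * n3 = r31 * n1 + r32 * n2"
  shows "((\<forall>x \<in> gen_monoid n1 n2 n3. maxlen n1 n2 n3 (x + n1) = maxlen n1 n2 n3 x + 1)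
            \<longleftrightarrow> r12 + r32 \<le> r21 + r23)
       \<and> ((\<forall>x \<in> gen_monoid n1 n2 n3. minlen n1 n2 n3 (x + n3) = minlen n1 n2 n3 x + 1)
            \<longleftrightarrow> r12 + r32 \<ge> r21 + r23)"
proof -
  have pos: "0 < n1" "n1 < n2" "n2 < n3" using assms(1) by (auto simp: emb_dim3_def)
  then have p: "0 < n1" "0 < n2" "0 < n3" by auto
  have d: "cc n1 n2 n3 1 * n1 \<noteq> cc n1 n2 n3 2 * n2 \<and> cc n1 n2 n3 1 * n1 \<noteq> cc n1 n2 n3 3 * n3
     \<and> cc n1 n2 n3 2 * n2 \<noteq> cc n1 n2 n3 3 * n3"
    by (rule card3_distinct[OF betti_sub[OF p] assms(2)])
  interpret three n1 n2 n3 "cc n1 n2 n3 1" "cc n1 n2 n3 2" "cc n1 n2 n3 3" r12 r13 r21 r23 r31 r32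
    using pos assms(3,4,5) d cc1[OF p(2)] cc2[OF p(1)] cc3[OF p(1)]
    by unfold_locales auto
  show ?thesis
    using part1_if part1_onlyif part2_if part2_onlyif herzog(2) by auto
qed



end
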